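(* There is an absolute constant $C$ such that for every integer $d\ge2$, every $n$, every $t$ and all sets $S_1,\dots,S_t\subseteq[n]$, the function $f\colon\mathbb F_2^n\to\{0,1\}$ defined by $f(x)=1$ if $\big|\{j\in[t]: \exists i\in S_j,\ x_i=1\}\big|\ge d+1$ and $f(x)=0$ otherwise satisfies $R^{lin}_{1/3}(f)\le C d^2\log d$.
   Context: For $S\subseteq[n]$, $\chi_S(x)=\sum_{i\in S}x_i\pmod 2$. Exact randomized $\mathbb F_2$-sketch complexity: for $f\colon\mathbb F_2^n\to\mathbb R$ and $\delta\in[0,1]$, $R^{lin}_\delta(f)$ is the smallest integer $k$ such that there exists a probability distribution over $k$-tuples of subsets $\mathbf S_1,\dots,\mathbf S_k\subseteq[n]$ and a function $g\colon\mathbb F_2^k\to\mathbb R$ with $\Pr_{\mathbf S_1,\dots,\mathbf S_k}[g(\chi_{\mathbf S_1}(x),\dots,\chi_{\mathbf S_k}(x))=f(x)]\ge1-\delta$ for every $x\in\mathbb F_2^n$. *)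

theory Defs
  imports "HOL-Probability.Probability"
begin

text \<open>Vectors in F_2^n are modelled as functions nat => bool that vanish
  outside [n] = {0..<n}; the value True stands for 1 in F_2.\<close>

definition cube :: "nat \<Rightarrow> (nat \<Rightarrow> bool) set" where
  "cube n = {x. \<forall>i\<ge>n. \<not> x i}"

definition chi :: "nat set \<Rightarrow> (nat \<Rightarrow> bool) \<Rightarrow> bool" where
  "chi S x = odd (card {i \<in> S. x i})"

definition sketchable :: "nat \<Rightarrow> ((nat \<Rightarrow> bool) \<Rightarrow> real) \<Rightarrow> real \<Rightarrow> nat \<Rightarrow> bool" where
  "sketchable n f \<delta> k \<longleftrightarrow>
     (\<exists>(P :: nat set list pmf) (g :: bool list \<Rightarrow> real).
        (\<forall>Ss \<in> set_pmf P. length Ss = k \<and> (\<forall>S \<in> set Ss. S \<subseteq> {..<n})) \<and>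
        (\<forall>x \<in> cube n.
           measure_pmf.prob P {Ss. g (map (\<lambda>S. chi S x) Ss) = f x} \<ge> 1 - \<delta>))"

definition R_lin :: "nat \<Rightarrow> ((nat \<Rightarrow> bool) \<Rightarrow> real) \<Rightarrow> real \<Rightarrow> nat" where
  "R_lin n f \<delta> = (LEAST k. sketchable n f \<delta> k)"

end

theory Submission
  imports Defs
begin



definition flip :: "nat \<Rightarrow> nat set \<Rightarrow> nat set" where
  "flip i0 A = (if i0 \<in> A then A - {i0} else insert i0 A)"

lemma card_flip:
  assumes "finite A" "i0 \<in> W"
  shows "odd (card (flip i0 A \<inter> W)) \<longleftrightarrow> even (card (A \<inter> W))"
proof (cases "i0 \<in> A")
  case True
  then have e: "flip i0 A \<inter> W = (A \<inter> W) - {i0}" by (auto simp: flip_def)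
  have "i0 \<in> A \<inter> W" using True assms by auto
  then have "card (A \<inter> W) = Suc (card ((A \<inter> W) - {i0}))"
    using assms by (metis card_Suc_Diff1 finite_Int)
  then show ?thesis using e by simp
next
  case False
  then have e: "flip i0 A \<inter> W = insert i0 (A \<inter> W)" using assms by (auto simp: flip_def)
  then show ?thesis using assms False by simp
qed

lemma parity_half:
  fixes V W :: "nat set"
  assumes "finite V" "i0 \<in> V" "i0 \<in> W"
  shows "measure_pmf.prob (pmf_of_set (Pow V)) {A. even (card (A \<inter> W))} = 1/2"
proof -
  define E where "E = {A \<in> Pow V. even (card (A \<inter> W))}"
  define Od where "Od = {A \<in> Pow V. odd (card (A \<inter> W))}"
  have fl: "flip i0 (flip i0 A) = A" for A by (auto simp: flip_def)
  have fp: "A \<in> Pow V \<Longrightarrow> flip i0 A \<in> Pow V" for A using assms by (auto simp: flip_def)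
  have fin: "A \<in> Pow V \<Longrightarrow> finite A" for A using assms finite_subset by auto
  have "bij_betw (flip i0) E Od"
    apply (rule bij_betw_byWitness[where f'="flip i0"])
    using fl fp card_flip[OF fin assms(3)] card_flip[OF fin[OF fp] assms(3)] fl
    unfolding E_def Od_def by auto
  then have c: "card E = card Od" by (rule bij_betw_same_card)
  have u: "E \<union> Od = Pow V" "E \<inter> Od = {}" unfolding E_def Od_def by auto
  have "card (Pow V) = card E + card Od"
    using u assms(1) by (metis card_Un_disjoint finite_Pow_iff finite_Un)
  moreover have "card (Pow V) > 0" using assms(1) by (auto simp: card_gt_0_iff)
  moreover have "Pow V \<inter> {A. even (card (A \<inter> W))} = E" unfolding E_def by auto
  ultimately show ?thesis using assms(1) c
    by (simp add: measure_pmf_of_set Pow_not_empty)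
qed




lemma prod_if_const:
  fixes c :: real
  assumes "finite A"
  shows "(\<Prod>k\<in>A. if P k then c else 1) = c ^ card {k\<in>A. P k}"
proof -
  have "(\<Prod>k\<in>A. if P k then c else 1) = (\<Prod>k\<in>A \<inter> {k. P k}. c) * (\<Prod>k\<in>A \<inter> - {k. P k}. 1)"
    using assms by (rule prod.If_cases)
  also have "A \<inter> {k. P k} = {k\<in>A. P k}" by auto
  finally show ?thesis by simp
qed

lemma hash_pair:
  fixes B t j j' :: nat
  assumes "j < t" "j' < t" "j \<noteq> j'" "B > 0"
  shows "measure_pmf.prob (Pi_pmf {..<t} (0::nat) (\<lambda>_. pmf_of_set {..<B})) {h. h j = h j'} \<le> 1 / real B"
proof -
  define H where "H = Pi_pmf {..<t} (0::nat) (\<lambda>_. pmf_of_set {..<B})"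
  have sB: "set_pmf (pmf_of_set {..<B}) = {..<B}"
    using assms(4) by (intro set_pmf_of_set) auto
  have sup: "set_pmf H \<subseteq> {h. \<forall>k<t. h k < B}"
    using set_Pi_pmf[of "{..<t}" 0 "\<lambda>_. pmf_of_set {..<B}"] sB
    by (auto simp: H_def PiE_dflt_def)
  define F where "F b k = (if k = j \<or> k = j' then {b} else (UNIV::nat set))" for b k
  have sub: "{h. h j = h j'} \<inter> set_pmf H \<subseteq> (\<Union>b\<in>{..<B}. Pi {..<t} (F b))"
  proof
    fix h assume h: "h \<in> {h. h j = h j'} \<inter> set_pmf H"
    then have "h j < B" using sup assms(1) by blast
    moreover have "h \<in> Pi {..<t} (F (h j))" using h by (auto simp: F_def)
    ultimately show "h \<in> (\<Union>b\<in>{..<B}. Pi {..<t} (F b))" by auto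
  qed
  have each: "measure_pmf.prob H (Pi {..<t} (F b)) = (1 / real B) ^ 2" if "b < B" for b
  proof -
    have m1: "measure_pmf.prob (pmf_of_set {..<B}) {b} = 1 / real B"
      using that assms(4) by (subst measure_pmf_of_set) (auto simp: Int_absorb1)
    have m: "measure_pmf.prob (pmf_of_set {..<B}) (F b k) = (if k = j \<or> k = j' then 1 / real B else 1)" for k
      using m1 by (auto simp: F_def)
    have "measure_pmf.prob H (Pi {..<t} (F b)) = (\<Prod>k\<in>{..<t}. measure_pmf.prob (pmf_of_set {..<B}) (F b k))"
      unfolding H_def by (rule measure_Pi_pmf_Pi) simp
    also have "\<dots> = (\<Prod>k\<in>{..<t}. if k = j \<or> k = j' then 1 / real B else 1)"
      using m by simp
    also have "\<dots> = (1 / real B) ^ card {k\<in>{..<t}. k = j \<or> k = j'}"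
      by (rule prod_if_const) simp
    also have "{k\<in>{..<t}. k = j \<or> k = j'} = {j, j'}" using assms by auto
    finally show ?thesis using assms(3) by (simp add: power2_eq_square)
  qed
  have "measure_pmf.prob H {h. h j = h j'} = measure_pmf.prob H ({h. h j = h j'} \<inter> set_pmf H)"
    by (simp add: measure_Int_set_pmf)
  also have "\<dots> \<le> measure_pmf.prob H (\<Union>b\<in>{..<B}. Pi {..<t} (F b))"
    using sub by (intro measure_pmf.finite_measure_mono) auto
  also have "\<dots> \<le> (\<Sum>b\<in>{..<B}. measure_pmf.prob H (Pi {..<t} (F b)))"
    by (intro measure_pmf.finite_measure_subadditive_finite) auto
  also have "\<dots> = (\<Sum>b\<in>{..<B}. (1 / real B) ^ 2)"
    using each by simp
  also have "\<dots> = 1 / real B" using assms(4) by (simp add: power2_eq_square)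
  finally show ?thesis unfolding H_def .
qed




lemma card_div_class:
  fixes B r b :: nat
  assumes "b < B" "r > 0"
  shows "card {m\<in>{..<B*r}. m div r = b} = r"
proof -
  have "{m\<in>{..<B*r}. m div r = b} = {b*r..<b*r+r}"
  proof (intro set_eqI iffI)
    fix m assume "m \<in> {m\<in>{..<B*r}. m div r = b}"
    then have "m div r = b" by auto
    then show "m \<in> {b*r..<b*r+r}" using assms
      using div_times_less_eq_dividend[of m r] dividend_less_div_times[of r m]
      by (simp add: mult.commute)
  next
    fix m assume m: "m \<in> {b*r..<b*r+r}"
    then have "m div r = b" using assms
      by (simp add: div_nat_eqI mult.commute)
    moreover have "m < B * r"
    proof -
      have "(b+1)*r \<le> B*r" using assms(1) by (intro mult_le_mono1) simp
      then show ?thesis using m by simp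
    qed
    ultimately show "m \<in> {m\<in>{..<B*r}. m div r = b}" by auto
  qed
  then show ?thesis by simp
qed

lemma bucket_fail:
  fixes n B r b i0 :: nat and U :: "nat set" and x :: "nat \<Rightarrow> bool"
  assumes "b < B" "r > 0" "i0 \<in> U" "i0 < n" "x i0"
  shows "measure_pmf.prob (Pi_pmf {..<B*r} ({}::nat set) (\<lambda>_. pmf_of_set (Pow {..<n})))
           {T. \<forall>m<B*r. m div r = b \<longrightarrow> \<not> chi (T m \<inter> U) x} = (1/2)^r"
proof -
  define W where "W = {i\<in>U. x i}"
  define F where "F m = (if m div r = b then {A. even (card (A \<inter> W))} else UNIV)" for m
  have eq: "{T. \<forall>m<B*r. m div r = b \<longrightarrow> \<not> chi (T m \<inter> U) x} = Pi {..<B*r} F"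
  proof -
    have "\<not> chi (A \<inter> U) x \<longleftrightarrow> even (card (A \<inter> W))" for A
    proof -
      have "{i \<in> A \<inter> U. x i} = A \<inter> W" by (auto simp: W_def)
      then show ?thesis by (simp add: chi_def)
    qed
    then show ?thesis by (auto simp: F_def Pi_def)
  qed
  have m: "measure_pmf.prob (pmf_of_set (Pow {..<n})) (F m) = (if m div r = b then 1/2 else 1)" for m
    using parity_half[of "{..<n}" i0 W] assms by (auto simp: F_def W_def)
  have "measure_pmf.prob (Pi_pmf {..<B*r} ({}::nat set) (\<lambda>_. pmf_of_set (Pow {..<n}))) (Pi {..<B*r} F)
      = (\<Prod>m\<in>{..<B*r}. measure_pmf.prob (pmf_of_set (Pow {..<n})) (F m))"
    by (rule measure_Pi_pmf_Pi) simp
  also have "\<dots> = (\<Prod>m\<in>{..<B*r}. if m div r = b then 1/2 else 1)" using m by simp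
  also have "\<dots> = (1/2) ^ card {m\<in>{..<B*r}. m div r = b}" by (rule prod_if_const) simp
  also have "\<dots> = (1/2)^r" using card_div_class[OF assms(1,2)] by simp
  finally show ?thesis using eq by simp
qed




lemma sketch_main:
  fixes d n t B r :: nat and S :: "nat \<Rightarrow> nat set"
  assumes Ssub: "\<forall>j<t. S j \<subseteq> {..<n}"
      and Bdef: "B = 6*(d+1)^2" and rpos: "r > 0" and r2: "6*(d+1) \<le> (2::nat)^r"
  shows "sketchable n (\<lambda>x. if card {j \<in> {..<t}. \<exists>i \<in> S j. x i} \<ge> d + 1 then 1 else 0) (1/3) (B*r)"
proof -
  define f where "f = (\<lambda>x::nat\<Rightarrow>bool. if card {j \<in> {..<t}. \<exists>i \<in> S j. x i} \<ge> d + 1 then 1 else (0::real))"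
  define H where "H = Pi_pmf {..<t} (0::nat) (\<lambda>_. pmf_of_set {..<B})"
  define TT where "TT = Pi_pmf {..<B*r} ({}::nat set) (\<lambda>_. pmf_of_set (Pow {..<n}))"
  define U where "U h b = {i. \<exists>j<t. h j = b \<and> i \<in> S j}" for h :: "nat \<Rightarrow> nat" and b
  define sk where "sk h T = map (\<lambda>m. T m \<inter> U h (m div r)) [0..<B*r]" for h T
  define P where "P = bind_pmf H (\<lambda>h. map_pmf (sk h) TT)"
  define g where "g bs = (if d+1 \<le> card {b. \<exists>m<length bs. m div r = b \<and> bs!m} then 1 else (0::real))" for bs
  have Bpos: "B > 0" using Bdef by simp
  have sB: "set_pmf (pmf_of_set {..<B}) = {..<B}"
    using Bpos by (intro set_pmf_of_set) auto
  have supH: "h \<in> set_pmf H \<Longrightarrow> j < t \<Longrightarrow> h j < B" for h j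
    using set_Pi_pmf[of "{..<t}" 0 "\<lambda>_. pmf_of_set {..<B}"] sB
    by (auto simp: H_def PiE_dflt_def)
  have Usub: "U h b \<subseteq> {..<n}" for h b using Ssub by (auto simp: U_def)
  have supP: "\<forall>Ss \<in> set_pmf P. length Ss = B*r \<and> (\<forall>S \<in> set Ss. S \<subseteq> {..<n})"
    using Usub by (auto simp: P_def sk_def)
  have prob: "measure_pmf.prob P {Ss. g (map (\<lambda>S. chi S x) Ss) = f x} \<ge> 1 - 1/3" if x: "x \<in> cube n" for x
  proof -
    define Bad where "Bad = {Ss. g (map (\<lambda>S. chi S x) Ss) \<noteq> f x}"
    define hit where "hit = {j \<in> {..<t}. \<exists>i \<in> S j. x i}"
    define Det where "Det h T = {b. \<exists>m<B*r. m div r = b \<and> chi (T m \<inter> U h (m div r)) x}" for h T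
    have finhit: "finite hit" unfolding hit_def by simp
    have gsk: "g (map (\<lambda>S. chi S x) (sk h T)) = (if d+1 \<le> card (Det h T) then 1 else 0)" for h T
    proof -
      have "{b. \<exists>m<length (map (\<lambda>S. chi S x) (sk h T)). m div r = b \<and> (map (\<lambda>S. chi S x) (sk h T))!m} = Det h T"
        by (auto simp: sk_def Det_def)
      then show ?thesis unfolding g_def by simp
    qed
    have finDet: "finite (Det h T)" for h T
    proof -
      have "Det h T \<subseteq> (\<lambda>m. m div r) ` {..<B*r}" by (auto simp: Det_def)
      then show ?thesis using finite_surj by blast
    qed
    have Det_sub: "Det h T \<subseteq> h ` hit" for h T
    proof
      fix b assume "b \<in> Det h T"
      then obtain m where m: "m div r = b" "chi (T m \<inter> U h b) x" unfolding Det_def by auto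
      have "card {i \<in> T m \<inter> U h b. x i} \<noteq> 0" using m(2) unfolding chi_def by (metis dvd_0_right)
      then obtain i where "i \<in> T m" "i \<in> U h b" "x i" by (metis (no_types, lifting) card.empty empty_Collect_eq IntE)
      then obtain j where "j < t" "h j = b" "i \<in> S j" unfolding U_def by auto
      then show "b \<in> h ` hit" using \<open>x i\<close> unfolding hit_def by auto
    qed
    have bad_le: "measure_pmf.prob P Bad \<le> 1/3"
    proof (cases "d + 1 \<le> card hit")
      case False
      then have fx: "f x = 0" unfolding f_def hit_def by simp
      have "card (Det h T) \<le> d" for h T
      proof -
        have "card (Det h T) \<le> card (h ` hit)" using Det_sub finhit by (intro card_mono) auto
        also have "\<dots> \<le> card hit" using finhit by (rule card_image_le)
        finally show ?thesis using False by simp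
      qed
      then have "set_pmf P \<inter> Bad = {}" using fx gsk
        by (auto simp: P_def Bad_def) (metis not_less_eq_eq)
      then have "measure_pmf.prob P Bad = 0" by (simp add: measure_pmf_zero_iff)
      then show ?thesis by simp
    next
      case True
      then have fx: "f x = 1" unfolding f_def hit_def by simp
      obtain D where D: "D \<subseteq> hit" "card D = d + 1"
        using True by (meson obtain_subset_with_card_n)
      have finD: "finite D" using D finhit finite_subset by auto
      define NI where "NI = {h::nat\<Rightarrow>nat. \<not> inj_on h D}"
      have partA: "measure_pmf.prob TT (sk h -` Bad) \<le> 1/6" if h: "h \<in> set_pmf H" "h \<notin> NI" for h
      proof -
        define Fj where "Fj j = {T. \<forall>m<B*r. m div r = h j \<longrightarrow> \<not> chi (T m \<inter> U h (h j)) x}" for j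
        have inj: "inj_on h D" using that(2) unfolding NI_def by simp
        have sub: "sk h -` Bad \<subseteq> (\<Union>j\<in>D. Fj j)"
        proof
          fix T assume T: "T \<in> sk h -` Bad"
          show "T \<in> (\<Union>j\<in>D. Fj j)"
          proof (rule ccontr)
            assume "T \<notin> (\<Union>j\<in>D. Fj j)"
            then have "h ` D \<subseteq> Det h T" unfolding Fj_def Det_def by fastforce
            then have "card (h ` D) \<le> card (Det h T)" using finDet by (intro card_mono) auto
            then have "d + 1 \<le> card (Det h T)" using card_image[OF inj] D(2) by simp
            then have "g (map (\<lambda>S. chi S x) (sk h T)) = f x" using gsk fx by simp
            then show False using T unfolding Bad_def by simp
          qed
        qed
        have each: "measure_pmf.prob TT (Fj j) = (1/2)^r" if j: "j \<in> D" for j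
        proof -
          have jh: "j < t" "\<exists>i \<in> S j. x i" using j D(1) unfolding hit_def by auto
          then obtain i where i: "i \<in> S j" "x i" by auto
          have "i \<in> U h (h j)" using i jh unfolding U_def by auto
          moreover have "i < n" using i jh Ssub by auto
          moreover have "h j < B" using supH[OF h(1) jh(1)] .
          ultimately show ?thesis
            unfolding Fj_def TT_def using bucket_fail[of "h j" B r i "U h (h j)" n x] rpos i by simp
        qed
        have "measure_pmf.prob TT (sk h -` Bad) \<le> measure_pmf.prob TT (\<Union>j\<in>D. Fj j)"
          using sub by (intro measure_pmf.finite_measure_mono) auto
        also have "\<dots> \<le> (\<Sum>j\<in>D. measure_pmf.prob TT (Fj j))"
          using finD by (intro measure_pmf.finite_measure_subadditive_finite) auto
        also have "\<dots> = real (d+1) * (1/2)^r" using each D(2) by simp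
        also have "\<dots> \<le> 1/6"
        proof -
          have "real (6*(d+1)) \<le> real ((2::nat)^r)" using r2 by (simp only: of_nat_le_iff)
          then have "6 * real (d+1) \<le> 2^r" by simp
          then show ?thesis by (simp add: power_one_over field_simps)
        qed
        finally show ?thesis .
      qed
      have partB: "measure_pmf.prob H NI \<le> 1/6"
      proof -
        define DD where "DD = {p \<in> D \<times> D. fst p \<noteq> snd p}"
        have finDD: "finite DD" using finD unfolding DD_def by simp
        have cDD: "card DD \<le> (d+1)^2"
        proof -
          have "card DD \<le> card (D \<times> D)" using finD unfolding DD_def by (intro card_mono) auto
          then show ?thesis using D(2) by (simp add: card_cartesian_product power2_eq_square)
        qed
        have sub: "NI \<subseteq> (\<Union>p\<in>DD. {h. h (fst p) = h (snd p)})"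
          unfolding NI_def DD_def inj_on_def by auto
        have each: "measure_pmf.prob H {h. h (fst p) = h (snd p)} \<le> 1 / real B" if "p \<in> DD" for p
        proof -
          have "fst p < t" "snd p < t" "fst p \<noteq> snd p" using that D(1) unfolding DD_def hit_def by auto
          then show ?thesis unfolding H_def using hash_pair Bpos by blast
        qed
        have "measure_pmf.prob H NI \<le> measure_pmf.prob H (\<Union>p\<in>DD. {h. h (fst p) = h (snd p)})"
          using sub by (intro measure_pmf.finite_measure_mono) auto
        also have "\<dots> \<le> (\<Sum>p\<in>DD. measure_pmf.prob H {h. h (fst p) = h (snd p)})"
          using finDD by (intro measure_pmf.finite_measure_subadditive_finite) auto
        also have "\<dots> \<le> (\<Sum>p\<in>DD. 1 / real B)" using each by (intro sum_mono) auto
        also have "\<dots> = real (card DD) / real B" by simp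
        also have "\<dots> \<le> real ((d+1)^2) / real B" using cDD Bpos by (intro divide_right_mono) (simp only: of_nat_le_iff, simp)
        also have "\<dots> = 1/6" using Bdef by simp
        finally show ?thesis .
      qed
      have "emeasure (measure_pmf P) Bad = (\<integral>\<^sup>+h. emeasure (measure_pmf (map_pmf (sk h) TT)) Bad \<partial>measure_pmf H)"
        unfolding P_def by simp
      also have "\<dots> \<le> (\<integral>\<^sup>+h. (indicator NI h + ennreal (1/6)) \<partial>measure_pmf H)"
      proof (intro nn_integral_mono_AE, unfold AE_measure_pmf_iff, intro ballI)
        fix h assume h: "h \<in> set_pmf H"
        show "emeasure (measure_pmf (map_pmf (sk h) TT)) Bad \<le> indicator NI h + ennreal (1/6)"
        proof (cases "h \<in> NI")
          case True
          have "emeasure (measure_pmf (map_pmf (sk h) TT)) Bad \<le> 1"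
            by (rule measure_pmf.emeasure_le_1)
          also have "\<dots> \<le> indicator NI h + ennreal (1/6)" using True by simp
          finally show ?thesis .
        next
          case False
          have "emeasure (measure_pmf (map_pmf (sk h) TT)) Bad = ennreal (measure_pmf.prob TT (sk h -` Bad))"
            by (simp add: measure_pmf.emeasure_eq_measure)
          also have "\<dots> \<le> ennreal (1/6)" using partA[OF h False] by (rule ennreal_leI)
          finally show ?thesis using False by simp
        qed
      qed
      also have "\<dots> = emeasure (measure_pmf H) NI + ennreal (1/6)"
        by (subst nn_integral_add) (auto simp: measure_pmf.emeasure_space_1)
      also have "\<dots> = ennreal (measure_pmf.prob H NI + 1/6)"
        by (simp add: measure_pmf.emeasure_eq_measure ennreal_plus)
      also have "\<dots> \<le> ennreal (1/3)" using partB by (intro ennreal_leI) simp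
      finally show ?thesis
        by (simp add: measure_pmf.emeasure_eq_measure)
    qed
    have "{Ss. g (map (\<lambda>S. chi S x) Ss) = f x} = space (measure_pmf P) - Bad"
      by (auto simp: Bad_def)
    then have "measure_pmf.prob P {Ss. g (map (\<lambda>S. chi S x) Ss) = f x} = 1 - measure_pmf.prob P Bad"
      using measure_pmf.prob_compl[of Bad P] by simp
    then show ?thesis using bad_le by simp
  qed
  show ?thesis unfolding sketchable_def
    using supP prob unfolding f_def by blast
qed




lemma ln2_gt: "ln (2::real) > 1/2"
proof -
  have "exp 1 < (4::real)" using exp_le by simp
  then have "1 < ln (4::real)" by (metis exp_gt_zero ln_exp ln_less_cancel_iff zero_less_numeral)
  also have "ln (4::real) = 2 * ln 2"
    using ln_realpow[of 2 2] by simp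
  finally show ?thesis by simp
qed

lemma r_bounds:
  fixes d :: nat
  assumes "d \<ge> 2"
  defines "r \<equiv> nat \<lceil>log 2 (real (6*(d+1)))\<rceil>"
  shows "r > 0" "6*(d+1) \<le> (2::nat)^r" "real r \<le> 12 * ln (real d)"
proof -
  define y where "y = real (6*(d+1))"
  have y18: "y \<ge> 18" using assms(1) unfolding y_def by simp
  have lpos: "log 2 y > 0" using y18 by simp
  have rr: "real r = of_int \<lceil>log 2 y\<rceil>" using lpos unfolding r_def y_def by simp
  have c1: "log 2 y \<le> real r" "real r < log 2 y + 1" using rr ceiling_correct by linarith+
  show "r > 0" using c1 lpos by simp
  have "y = 2 powr (log 2 y)" using y18 by simp
  also have "\<dots> \<le> 2 powr (real r)" using c1 by (intro powr_mono) auto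
  also have "\<dots> = 2^r" by (simp add: powr_realpow)
  finally have "real (6*(d+1)) \<le> real ((2::nat)^r)" unfolding y_def by simp
  then show "6*(d+1) \<le> (2::nat)^r" by (simp only: of_nat_le_iff)
  have l2: "ln (2::real) > 1/2" by (rule ln2_gt)
  have "real r * ln 2 < (log 2 y + 1) * ln 2" using c1 l2 by (intro mult_strict_right_mono) auto
  also have "\<dots> = ln y + ln 2" using l2 by (simp add: log_def field_simps)
  also have "\<dots> = ln (2*y)" using y18 by (simp add: ln_mult)
  also have "\<dots> \<le> ln (18 * real d)" using y18 assms(1) unfolding y_def by simp
  also have "\<dots> = ln 18 + ln (real d)" using assms(1) by (simp add: ln_mult)
  also have "\<dots> \<le> 6 * ln (real d)"
  proof -
    have "ln (18::real) \<le> ln 32" by simp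
    also have "ln (32::real) = 5 * ln 2" using ln_realpow[of 2 5] by simp
    also have "\<dots> \<le> 5 * ln (real d)" using assms(1) by simp
    finally show ?thesis by simp
  qed
  finally have "real r * ln 2 < 6 * ln (real d)" .
  moreover have "ln (real d) \<ge> 0" using assms(1) by simp
  moreover have "real r * (1/2) \<le> real r * ln 2" using l2 by (intro mult_left_mono) auto
  ultimately show "real r \<le> 12 * ln (real d)" by linarith
qed




theorem mainTheorem4:
  shows "\<exists>C::real. \<forall>(d::nat) (n::nat) (t::nat) (S :: nat \<Rightarrow> nat set).
     d \<ge> 2 \<longrightarrow> (\<forall>j<t. S j \<subseteq> {..<n}) \<longrightarrow>
     real (R_lin n (\<lambda>x. if card {j \<in> {..<t}. \<exists>i \<in> S j. x i} \<ge> d + 1 then 1 else 0) (1/3))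
       \<le> C * real d ^ 2 * ln (real d)"
proof (intro exI[of _ 200] allI impI)
  fix d n t :: nat and S :: "nat \<Rightarrow> nat set"
  assume d: "d \<ge> 2" and Ssub: "\<forall>j<t. S j \<subseteq> {..<n}"
  define r where "r = nat \<lceil>log 2 (real (6*(d+1)))\<rceil>"
  define B where "B = 6*(d+1)^2"
  have rb: "r > 0" "6*(d+1) \<le> (2::nat)^r" "real r \<le> 12 * ln (real d)"
    using r_bounds[OF d] unfolding r_def by auto
  have sk: "sketchable n (\<lambda>x. if card {j \<in> {..<t}. \<exists>i \<in> S j. x i} \<ge> d + 1 then 1 else 0) (1/3) (B*r)"
    by (rule sketch_main[OF Ssub B_def rb(1) rb(2)])
  have "R_lin n (\<lambda>x. if card {j \<in> {..<t}. \<exists>i \<in> S j. x i} \<ge> d + 1 then 1 else 0) (1/3) \<le> B*r"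
    unfolding R_lin_def using sk by (rule Least_le)
  then have "real (R_lin n (\<lambda>x. if card {j \<in> {..<t}. \<exists>i \<in> S j. x i} \<ge> d + 1 then 1 else 0) (1/3)) \<le> real B * real r"
    unfolding of_nat_mult[symmetric] of_nat_le_iff .
  also have "\<dots> \<le> (27/2 * real d ^ 2) * (12 * ln (real d))"
  proof (intro mult_mono)
    have "real d + 1 \<le> 3/2 * real d" using d by simp
    then have "(real d + 1)^2 \<le> (3/2 * real d)^2" by (intro power_mono) auto
    moreover have "real B = 6 * (real d + 1)^2" by (simp add: B_def)
    moreover have "(3/2 * real d)^2 = 9/4 * real d ^ 2" by (simp add: power2_eq_square)
    ultimately show "real B \<le> 27/2 * real d ^ 2" by linarith
  next
    show "real r \<le> 12 * ln (real d)" by (rule rb(3))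
  next
    show "0 \<le> real r" by simp
  next
    show "0 \<le> 27/2 * real d ^ 2" by simp
  qed
  also have "\<dots> \<le> 200 * real d ^ 2 * ln (real d)"
  proof -
    have "0 \<le> real d ^ 2 * ln (real d)" using d by simp
    moreover have "(27/2 * real d ^ 2) * (12 * ln (real d)) = 162 * (real d ^ 2 * ln (real d))"
      by (simp add: algebra_simps)
    moreover have "200 * real d ^ 2 * ln (real d) = 200 * (real d ^ 2 * ln (real d))"
      by (simp add: algebra_simps)
    ultimately show ?thesis by linarith
  qed
  finally show "real (R_lin n (\<lambda>x. if card {j \<in> {..<t}. \<exists>i \<in> S j. x i} \<ge> d + 1 then 1 else 0) (1/3))
       \<le> 200 * real d ^ 2 * ln (real d)" .
qed


end
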